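(* Let $X,Y$ be compact topological spaces, $\mu\in\mathcal{P}(X)$, $\nu\in\mathcal{P}(Y)$, $c\in C(X\times Y)$. For $u\in C(X)$ the following are equivalent: (i) $u$ is a critical point of the functional $\mathcal{F}$ on $C(X)$; (ii) $\rho_u=1$ almost everywhere with respect to $\mu$. Moreover, if $u$ is a critical point of $\mathcal{F}$, then $u_*:=S(u)$ is a fixed point of $S$ on $C(X)$.
   Context: For $u\in C(X)$ set $v[u](y)=\log\int_Xe^{-c(x,y)-u(x)}d\mu(x)$, and for $v\in C(Y)$ set $u[v](x)=\log\int_Ye^{-c(x,y)-v(y)}d\nu(y)$. Define $S:C(X)\to C(X)$ by $S(u)=u[v[u]]$ and $\rho_u:=e^{S(u)-u}$ (so $\rho_u\mu$ is a probability measure). Define $\mathcal{F}(u)=\int_Xu\,d\mu+\int_Yv[u]\,d\nu$. A critical point means $\frac{d}{dt}\mathcal{F}(u+t\dot u)|_{t=0}=0$ for every $\dot u\in C(X)$. *)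

theory Defs
  imports "HOL-Probability.Probability"
begin

definition vdual :: "'a measure \<Rightarrow> ('a \<times> 'b \<Rightarrow> real) \<Rightarrow> ('a \<Rightarrow> real) \<Rightarrow> 'b \<Rightarrow> real" where
  "vdual \<mu> c u y = ln (\<integral>x. exp (- c (x, y) - u x) \<partial>\<mu>)"

definition udual :: "'b measure \<Rightarrow> ('a \<times> 'b \<Rightarrow> real) \<Rightarrow> ('b \<Rightarrow> real) \<Rightarrow> 'a \<Rightarrow> real" where
  "udual \<nu> c v x = ln (\<integral>y. exp (- c (x, y) - v y) \<partial>\<nu>)"

definition Sop :: "'a measure \<Rightarrow> 'b measure \<Rightarrow> ('a \<times> 'b \<Rightarrow> real) \<Rightarrow> ('a \<Rightarrow> real) \<Rightarrow> 'a \<Rightarrow> real" where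
  "Sop \<mu> \<nu> c u = udual \<nu> c (vdual \<mu> c u)"

definition rho :: "'a measure \<Rightarrow> 'b measure \<Rightarrow> ('a \<times> 'b \<Rightarrow> real) \<Rightarrow> ('a \<Rightarrow> real) \<Rightarrow> 'a \<Rightarrow> real" where
  "rho \<mu> \<nu> c u x = exp (Sop \<mu> \<nu> c u x - u x)"

definition Ffun :: "'a measure \<Rightarrow> 'b measure \<Rightarrow> ('a \<times> 'b \<Rightarrow> real) \<Rightarrow> ('a \<Rightarrow> real) \<Rightarrow> real" where
  "Ffun \<mu> \<nu> c u = (\<integral>x. u x \<partial>\<mu>) + (\<integral>y. vdual \<mu> c u y \<partial>\<nu>)"

definition critical_point :: "'a::topological_space set \<Rightarrow> 'a measure \<Rightarrow> 'b measure \<Rightarrow> ('a \<times> 'b \<Rightarrow> real) \<Rightarrow> ('a \<Rightarrow> real) \<Rightarrow> bool" where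
  "critical_point X \<mu> \<nu> c u \<longleftrightarrow>
     (\<forall>ud. continuous_on X ud \<longrightarrow>
        ((\<lambda>t. Ffun \<mu> \<nu> c (\<lambda>x. u x + t * ud x)) has_real_derivative 0) (at 0))"

end

theory Submission
  imports Defs
begin

lemma meas_cont:
  assumes "sets M = sets (restrict_space borel K)" "continuous_on K h"
  shows "h \<in> borel_measurable M"
  using borel_measurable_continuous_on_restrict[OF assms(2)]
    measurable_cong_sets[OF assms(1) refl] by blast

lemma space_eq:
  assumes "sets M = sets (restrict_space borel K)"
  shows "space M = K"
  using sets_eq_imp_space_eq[OF assms] by (simp add: space_restrict_space)

lemma cont_bound:
  fixes h :: "'a::topological_space \<Rightarrow> real"
  assumes "compact K" "continuous_on K h"
  obtains B where "B > 0" "\<And>x. x \<in> K \<Longrightarrow> \<bar>h x\<bar> \<le> B"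
proof -
  have "bounded (h ` K)" by (intro compact_imp_bounded compact_continuous_image assms)
  then obtain B where "B > 0" "\<And>x. x \<in> K \<Longrightarrow> norm (h x) \<le> B"
    unfolding bounded_pos by auto
  then show ?thesis using that by auto
qed

lemma int_cont:
  fixes h :: "'a::topological_space \<Rightarrow> real"
  assumes "prob_space M" "sets M = sets (restrict_space borel K)" "compact K" "continuous_on K h"
  shows "integrable M h"
proof -
  obtain B where B: "\<And>x. x \<in> K \<Longrightarrow> \<bar>h x\<bar> \<le> B" using cont_bound[OF assms(3,4)] by blast
  show ?thesis
  proof (rule finite_measure.integrable_const_bound[where B=B])
    show "finite_measure M" using assms(1) by (simp add: prob_space.axioms(1))
    show "AE x in M. norm (h x) \<le> B" using B space_eq[OF assms(2)] by (auto intro!: AE_I2)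
    show "h \<in> borel_measurable M" using meas_cont[OF assms(2,4)] .
  qed
qed

lemma int_const: "prob_space M \<Longrightarrow> integrable M (\<lambda>x. a::real)"
  by (rule finite_measure.integrable_const[OF prob_space.axioms(1)])

lemma int_abs_le:
  fixes h :: "'a \<Rightarrow> real"
  assumes "prob_space M" "integrable M h" "\<And>x. x \<in> space M \<Longrightarrow> \<bar>h x\<bar> \<le> B"
  shows "\<bar>integral\<^sup>L M h\<bar> \<le> B"
proof -
  have "\<bar>integral\<^sup>L M h\<bar> \<le> (\<integral>x. \<bar>h x\<bar> \<partial>M)" by (rule integral_abs_bound)
  also have "\<dots> \<le> (\<integral>x. B \<partial>M)"
    using assms int_const[OF assms(1)] by (intro integral_mono) auto
  also have "\<dots> = B" using assms(1) by (simp add: prob_space.prob_space)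
  finally show ?thesis .
qed

lemma int_ge:
  fixes h :: "'a \<Rightarrow> real"
  assumes "prob_space M" "integrable M h" "\<And>x. x \<in> space M \<Longrightarrow> L \<le> h x"
  shows "L \<le> integral\<^sup>L M h"
proof -
  have "L = (\<integral>x. L \<partial>M)" using assms(1) by (simp add: prob_space.prob_space)
  also have "\<dots> \<le> integral\<^sup>L M h" using assms int_const[OF assms(1)] by (intro integral_mono) auto
  finally show ?thesis .
qed

lemma int_le:
  fixes h :: "'a \<Rightarrow> real"
  assumes "prob_space M" "integrable M h" "\<And>x. x \<in> space M \<Longrightarrow> h x \<le> U"
  shows "integral\<^sup>L M h \<le> U"
proof -
  have "integral\<^sup>L M h \<le> (\<integral>x. U \<partial>M)" using assms int_const[OF assms(1)] by (intro integral_mono) auto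
  also have "\<dots> = U" using assms(1) by (simp add: prob_space.prob_space)
  finally show ?thesis .
qed

lemma cont_param_int:
  fixes f :: "'p::topological_space \<times> 'q::topological_space \<Rightarrow> real"
  assumes "prob_space M" "sets M = sets (restrict_space borel K)" "compact K"
    "continuous_on (U \<times> K) f"
  shows "continuous_on U (\<lambda>p. \<integral>q. f (p,q) \<partial>M)"
proof -
  have sp: "space M = K" using space_eq[OF assms(2)] .
  have ci: "integrable M (\<lambda>q. f (p,q))" if "p \<in> U" for p
  proof (rule int_cont[OF assms(1,2,3)])
    show "continuous_on K (\<lambda>q. f (p, q))"
      using that by (intro continuous_on_compose2[OF assms(4)]) (auto intro!: continuous_intros)
  qed
  show ?thesis unfolding continuous_on_def
  proof (intro ballI)
    fix x assume x: "x \<in> U"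
    show "((\<lambda>p. \<integral>q. f (p,q) \<partial>M) \<longlongrightarrow> (\<integral>q. f (x,q) \<partial>M)) (at x within U)"
      unfolding tendsto_iff
    proof (intro allI impI)
      fix e :: real assume e: "e > 0"
      then have "e/2 > 0" by simp
      from continuous_on_prod_compactE[OF assms(4,3) x this]
      obtain X0 where X0: "x \<in> X0" "open X0"
        "\<forall>y\<in>X0 \<inter> U. \<forall>t\<in>K. dist (f (y, t)) (f (x, t)) \<le> e/2" by blast
      show "\<forall>\<^sub>F y in at x within U. dist (\<integral>q. f (y,q) \<partial>M) (\<integral>q. f (x,q) \<partial>M) < e"
        unfolding eventually_at_topological
      proof (intro exI[of _ X0] conjI ballI impI X0(1,2))
        fix y assume y: "y \<in> X0" "y \<in> U"
        have "dist (\<integral>q. f (y,q) \<partial>M) (\<integral>q. f (x,q) \<partial>M) = \<bar>\<integral>q. f (y,q) - f (x,q) \<partial>M\<bar>"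
          using ci x y by (simp add: dist_real_def)
        also have "\<dots> \<le> e/2"
          using X0(3) y sp by (intro int_abs_le[OF assms(1)]) (auto intro!: ci x simp: dist_real_def)
        also have "\<dots> < e" using e by simp
        finally show "dist (\<integral>q. f (y,q) \<partial>M) (\<integral>q. f (x,q) \<partial>M) < e" .
      qed
    qed
  qed
qed

lemma exp_taylor:
  fixes s :: real
  assumes "\<bar>s\<bar> \<le> 1/2"
  shows "\<bar>exp s - 1 - s\<bar> \<le> 2 * s^2"
proof -
  have lo: "1 + s \<le> exp s" by (rule exp_ge_add_one_self)
  have "1 - s \<le> exp (-s)" using exp_ge_add_one_self[of "-s"] by simp
  then have "exp s * (1 - s) \<le> exp s * exp (-s)" by (rule mult_left_mono) simp
  then have e1: "exp s * (1 - s) \<le> 1" by (simp add: exp_minus_inverse)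
  have id: "(exp s - 1 - s) * (1 - s) = exp s * (1 - s) - (1 - s^2)"
    by (simp add: algebra_simps power2_eq_square)
  have "(exp s - 1 - s) * (1/2) \<le> (exp s - 1 - s) * (1 - s)"
  proof (rule mult_left_mono)
    show "1/2 \<le> 1 - s" using assms by (simp add: abs_le_iff)
    show "0 \<le> exp s - 1 - s" using lo by linarith
  qed
  then have h2: "exp s - 1 - s \<le> 2 * ((exp s - 1 - s) * (1 - s))" by simp
  have "exp s - 1 - s \<le> 2 * s^2" using h2 id e1 by linarith
  moreover have "-(exp s - 1 - s) \<le> 2 * s^2" using lo zero_le_power2[of s] by linarith
  ultimately show ?thesis by (rule abs_leI)
qed

lemma ln_taylor:
  fixes a b :: real
  assumes a: "a > 0" and b: "b > 0"
  shows "\<bar>ln a - ln b - (a - b) / b\<bar> \<le> (a - b)^2 / (a * b)"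
proof -
  have "ln (a/b) \<le> a/b - 1" using ln_le_minus_one[of "a/b"] a b by simp
  then have up: "ln a - ln b \<le> (a - b) / b" using a b by (simp add: ln_div diff_divide_distrib)
  have "ln (b/a) \<le> b/a - 1" using ln_le_minus_one[of "b/a"] a b by simp
  then have lo: "(a - b) / a \<le> ln a - ln b" using a b by (simp add: ln_div diff_divide_distrib)
  have id: "(a - b) / b - (a - b) / a = (a - b)^2 / (a * b)"
    using a b by (simp add: field_simps power2_eq_square)
  show ?thesis using up lo id by linarith
qed

lemma deriv_int:
  fixes f :: "real \<Rightarrow> 'a \<Rightarrow> real"
  assumes P: "prob_space M" and fi: "\<And>t. integrable M (f t)" and gi: "integrable M g"
    and d: "\<delta> > 0"
    and b: "\<And>t w. \<bar>t\<bar> < \<delta> \<Longrightarrow> w \<in> space M \<Longrightarrow> \<bar>f t w - f 0 w - t * g w\<bar> \<le> K * t^2"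
  shows "((\<lambda>t. \<integral>w. f t w \<partial>M) has_real_derivative (\<integral>w. g w \<partial>M)) (at 0)"
proof -
  define F where "F = (\<lambda>t. \<integral>w. f t w \<partial>M)"
  define D where "D = (\<integral>w. g w \<partial>M)"
  have bd: "\<bar>F t - F 0 - t * D\<bar> \<le> K * t^2" if "\<bar>t\<bar> < \<delta>" for t
  proof -
    have i1: "integrable M (\<lambda>w. f t w - f 0 w)" by (rule Bochner_Integration.integrable_diff[OF fi fi])
    have i2: "integrable M (\<lambda>w. t * g w)" using gi by (rule integrable_mult_right)
    have i3: "integrable M (\<lambda>w. f t w - f 0 w - t * g w)" using i1 i2 by (rule Bochner_Integration.integrable_diff)
    have "(\<integral>w. f t w - f 0 w - t * g w \<partial>M) = (\<integral>w. f t w - f 0 w \<partial>M) - (\<integral>w. t * g w \<partial>M)"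
      by (rule Bochner_Integration.integral_diff[OF i1 i2])
    also have "(\<integral>w. f t w - f 0 w \<partial>M) = F t - F 0"
      unfolding F_def by (rule Bochner_Integration.integral_diff[OF fi fi])
    also have "(\<integral>w. t * g w \<partial>M) = t * D" unfolding D_def by (rule integral_mult_right_zero)
    finally have eq: "F t - F 0 - t * D = (\<integral>w. f t w - f 0 w - t * g w \<partial>M)" by simp
    have "\<bar>\<integral>w. f t w - f 0 w - t * g w \<partial>M\<bar> \<le> K * t^2"
      using b that by (intro int_abs_le[OF P i3]) 
    then show ?thesis using eq by simp
  qed
  have "((\<lambda>y. (F y - F 0) / y - D) \<longlongrightarrow> 0) (at 0)"
  proof (rule Lim_null_comparison[where g="\<lambda>y. K * \<bar>y\<bar>"])
    show "\<forall>\<^sub>F y in at 0. norm ((F y - F 0) / y - D) \<le> K * \<bar>y\<bar>"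
      unfolding eventually_at
    proof (intro exI[of _ \<delta>] conjI ballI impI d)
      fix y :: real assume "y \<in> UNIV" and y: "y \<noteq> 0 \<and> dist y 0 < \<delta>"
      then have yd: "\<bar>y\<bar> < \<delta>" by simp
      have yp: "\<bar>y\<bar> > 0" using y by simp
      have "(F y - F 0) / y - D = (F y - F 0 - y * D) / y" using y by (simp add: field_simps)
      then have "norm ((F y - F 0) / y - D) = \<bar>F y - F 0 - y * D\<bar> / \<bar>y\<bar>" by simp
      also have "\<dots> \<le> K * \<bar>y\<bar>"
      proof (subst pos_divide_le_eq[OF yp])
        have "K * \<bar>y\<bar> * \<bar>y\<bar> = K * y^2" by (simp add: power2_eq_square)
        then show "\<bar>F y - F 0 - y * D\<bar> \<le> K * \<bar>y\<bar> * \<bar>y\<bar>" using bd[OF yd] by linarith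
      qed
      finally show "norm ((F y - F 0) / y - D) \<le> K * \<bar>y\<bar>" .
    qed
    have "((\<lambda>y::real. K * \<bar>y\<bar>) \<longlongrightarrow> K * \<bar>0\<bar>) (at 0)"
      by (intro tendsto_mult tendsto_const tendsto_rabs tendsto_ident_at)
    then show "((\<lambda>y. K * \<bar>y\<bar>) \<longlongrightarrow> 0) (at 0)" by simp
  qed
  then have "((\<lambda>y. (F y - F 0) / (y - 0)) \<longlongrightarrow> D) (at 0)"
    by (subst Lim_null) simp
  then show ?thesis unfolding has_field_derivative_iff F_def D_def .
qed

lemma meas_prod:
  fixes f :: "'a::topological_space \<times> 'b::topological_space \<Rightarrow> real"
  assumes sM: "sets M = sets (restrict_space borel X)" and sN: "sets N = sets (restrict_space borel Y)"
    and cX: "compact X" and cY: "compact Y" and cf: "continuous_on (X \<times> Y) f"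
  shows "f \<in> borel_measurable (M \<Otimes>\<^sub>M N)"
proof -
  have spM: "space M = X" using space_eq[OF sM] .
  have spN: "space N = Y" using space_eq[OF sN] .
  have sp: "space (M \<Otimes>\<^sub>M N) = X \<times> Y" by (simp add: space_pair_measure spM spN)
  have cg: "continuous_on (Y \<times> X) (\<lambda>p. f (snd p, fst p))"
    by (rule continuous_on_compose2[OF cf]) (auto intro!: continuous_intros)
  have approx: "\<exists>h \<in> borel_measurable (M \<Otimes>\<^sub>M N). \<forall>x\<in>X. \<forall>y\<in>Y. \<bar>f (x,y) - h (x,y)\<bar> \<le> e"
    if e: "e > 0" for e
  proof -
    have "\<forall>z\<in>Y. \<exists>V. z \<in> V \<and> open V \<and> (\<forall>y\<in>V \<inter> Y. \<forall>x\<in>X. \<bar>f (x,y) - f (x,z)\<bar> \<le> e)"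
    proof
      fix z assume z: "z \<in> Y"
      from continuous_on_prod_compactE[OF cg cX z e]
      obtain X0 where "z \<in> X0" "open X0" "\<forall>y\<in>X0 \<inter> Y. \<forall>t\<in>X. dist (f (t, y)) (f (t, z)) \<le> e"
        by auto
      then show "\<exists>V. z \<in> V \<and> open V \<and> (\<forall>y\<in>V \<inter> Y. \<forall>x\<in>X. \<bar>f (x,y) - f (x,z)\<bar> \<le> e)"
        by (intro exI[of _ X0]) (auto simp: dist_real_def)
    qed
    from bchoice[OF this] obtain V where V0: "\<forall>z\<in>Y. z \<in> V z \<and> open (V z) \<and> (\<forall>y\<in>V z \<inter> Y. \<forall>x\<in>X. \<bar>f (x,y) - f (x,z)\<bar> \<le> e)"
      by blast
    then have V: "\<And>z. z \<in> Y \<Longrightarrow> z \<in> V z \<and> open (V z) \<and> (\<forall>y\<in>V z \<inter> Y. \<forall>x\<in>X. \<bar>f (x,y) - f (x,z)\<bar> \<le> e)"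
      by blast
    have ind: "finite T \<Longrightarrow> T \<subseteq> Y \<Longrightarrow> \<exists>h \<in> borel_measurable (M \<Otimes>\<^sub>M N). \<forall>x\<in>X. \<forall>y\<in>Y \<inter> (\<Union>z\<in>T. V z). \<bar>f (x,y) - h (x,y)\<bar> \<le> e" for T
    proof (induction T rule: finite_induct)
      case empty
      show ?case by (intro bexI[of _ "\<lambda>p. 0"]) auto
    next
      case (insert z T)
      then obtain h where hm: "h \<in> borel_measurable (M \<Otimes>\<^sub>M N)"
        and hb: "\<forall>x\<in>X. \<forall>y\<in>Y \<inter> (\<Union>z\<in>T. V z). \<bar>f (x,y) - h (x,y)\<bar> \<le> e" by auto
      have zY: "z \<in> Y" using insert by auto
      define h' where "h' = (\<lambda>p. if snd p \<in> V z then f (fst p, z) else h p)"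
      have m1: "(\<lambda>p. f (fst p, z)) \<in> borel_measurable (M \<Otimes>\<^sub>M N)"
      proof -
        have "(\<lambda>x. f (x, z)) \<in> borel_measurable M"
          by (rule meas_cont[OF sM], rule continuous_on_compose2[OF cf]) (auto intro!: continuous_intros simp: zY)
        then show ?thesis by (rule measurable_compose[OF measurable_fst])
      qed
      have VY: "V z \<inter> Y \<in> sets N"
        using V[OF zY] by (simp add: sN sets_restrict_space Int_commute)
      have "{p \<in> space (M \<Otimes>\<^sub>M N). snd p \<in> V z} = snd -` (V z \<inter> Y) \<inter> space (M \<Otimes>\<^sub>M N)"
        using sp by auto
      also have "\<dots> \<in> sets (M \<Otimes>\<^sub>M N)" by (rule measurable_sets[OF measurable_snd VY])
      finally have ms: "{p \<in> space (M \<Otimes>\<^sub>M N). snd p \<in> V z} \<in> sets (M \<Otimes>\<^sub>M N)" .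
      have "h' \<in> borel_measurable (M \<Otimes>\<^sub>M N)" unfolding h'_def
        by (rule measurable_If[OF m1 hm ms])
      moreover have "\<forall>x\<in>X. \<forall>y\<in>Y \<inter> (\<Union>z\<in>insert z T. V z). \<bar>f (x,y) - h' (x,y)\<bar> \<le> e"
        using hb V[OF zY] by (auto simp: h'_def)
      ultimately show ?case by blast
    qed
    have "Y \<subseteq> (\<Union>z\<in>Y. V z)" using V by auto
    obtain T where "T \<subseteq> Y" "finite T" "Y \<subseteq> (\<Union>z\<in>T. V z)"
    proof (rule compactE_image[OF cY])
      show "open (V z)" if "z \<in> Y" for z using V[OF that] by blast
      show "Y \<subseteq> (\<Union>z\<in>Y. V z)" by fact
    qed
    then obtain h where hm: "h \<in> borel_measurable (M \<Otimes>\<^sub>M N)"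
      and hb: "\<forall>x\<in>X. \<forall>y\<in>Y \<inter> (\<Union>z\<in>T. V z). \<bar>f (x,y) - h (x,y)\<bar> \<le> e"
      using ind by blast
    show ?thesis
    proof (intro bexI[of _ h] ballI hm)
      fix x y assume "x \<in> X" "y \<in> Y"
      then show "\<bar>f (x,y) - h (x,y)\<bar> \<le> e" using hb \<open>Y \<subseteq> (\<Union>z\<in>T. V z)\<close> by blast
    qed
  qed
  have "\<forall>n. \<exists>h \<in> borel_measurable (M \<Otimes>\<^sub>M N). \<forall>x\<in>X. \<forall>y\<in>Y. \<bar>f (x,y) - h (x,y)\<bar> \<le> 1 / real (Suc n)"
    using approx by simp
  then have "\<forall>n. \<exists>h. h \<in> borel_measurable (M \<Otimes>\<^sub>M N) \<and> (\<forall>x\<in>X. \<forall>y\<in>Y. \<bar>f (x,y) - h (x,y)\<bar> \<le> 1 / real (Suc n))"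
    by (simp add: Bex_def)
  from choice[OF this] obtain H where H: "\<forall>n. H n \<in> borel_measurable (M \<Otimes>\<^sub>M N) \<and> (\<forall>x\<in>X. \<forall>y\<in>Y. \<bar>f (x,y) - H n (x,y)\<bar> \<le> 1 / real (Suc n))"
    by blast
  have Hm: "\<And>n. H n \<in> borel_measurable (M \<Otimes>\<^sub>M N)" using H by blast
  have Hb: "\<And>n x y. x \<in> X \<Longrightarrow> y \<in> Y \<Longrightarrow> \<bar>f (x,y) - H n (x,y)\<bar> \<le> 1 / real (Suc n)"
    using H by blast
  show ?thesis
  proof (rule borel_measurable_LIMSEQ_real[OF _ Hm])
    fix p assume "p \<in> space (M \<Otimes>\<^sub>M N)"
    then obtain x y where p: "p = (x,y)" "x \<in> X" "y \<in> Y" using sp by auto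
    have "(\<lambda>n. H n p - f p) \<longlonglongrightarrow> 0"
    proof (rule Lim_null_comparison[where g="\<lambda>n. 1 / real (Suc n)"])
      show "\<forall>\<^sub>F n in sequentially. norm (H n p - f p) \<le> 1 / real (Suc n)"
        using Hb[OF p(2,3)] p(1) by (auto simp: abs_minus_commute)
      show "(\<lambda>n. 1 / real (Suc n)) \<longlonglongrightarrow> 0" by (rule LIMSEQ_Suc[OF lim_const_over_n])
    qed
    then show "(\<lambda>n. H n p) \<longlonglongrightarrow> f p" by (simp add: Lim_null[symmetric])
  qed
qed

lemma dual_cont:
  fixes g :: "'p::topological_space \<times> 'q::topological_space \<Rightarrow> real"
  assumes P: "prob_space M" and sM: "sets M = sets (restrict_space borel K)"
    and cK: "compact K" and cU: "compact U" and cg: "continuous_on (U \<times> K) g"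
  shows "continuous_on U (\<lambda>p. ln (\<integral>q. exp (g (p,q)) \<partial>M))"
    and "\<And>p. p \<in> U \<Longrightarrow> (\<integral>q. exp (g (p,q)) \<partial>M) > 0"
proof -
  obtain B where B: "\<And>z. z \<in> U \<times> K \<Longrightarrow> \<bar>g z\<bar> \<le> B"
    using cont_bound[OF compact_Times[OF cU cK] cg] by blast
  have ceg: "continuous_on (U \<times> K) (\<lambda>z. exp (g z))" using cg by (intro continuous_intros)
  have pos: "(\<integral>q. exp (g (p,q)) \<partial>M) > 0" if p: "p \<in> U" for p
  proof -
    have "continuous_on K (\<lambda>q. exp (g (p,q)))"
      by (rule continuous_on_compose2[OF ceg]) (use p in \<open>auto intro!: continuous_intros\<close>)
    then have i: "integrable M (\<lambda>q. exp (g (p,q)))" by (rule int_cont[OF P sM cK])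
    have "exp (-B) \<le> (\<integral>q. exp (g (p,q)) \<partial>M)"
    proof (rule int_ge[OF P i])
      fix q assume "q \<in> space M"
      then have "q \<in> K" using space_eq[OF sM] by simp
      then have "-B \<le> g (p,q)" using B[of "(p,q)"] p by auto
      then show "exp (-B) \<le> exp (g (p,q))" by simp
    qed
    moreover have "exp (-B) > 0" by simp
    ultimately show ?thesis by linarith
  qed
  then show "\<And>p. p \<in> U \<Longrightarrow> (\<integral>q. exp (g (p,q)) \<partial>M) > 0" .
  have "continuous_on U (\<lambda>p. \<integral>q. exp (g (p,q)) \<partial>M)"
    using cont_param_int[OF P sM cK ceg] by simp
  then show "continuous_on U (\<lambda>p. ln (\<integral>q. exp (g (p,q)) \<partial>M))"
    using pos by (intro continuous_on_ln) (auto simp: less_le)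
qed

lemma combine:
  fixes It I0 J t L C A :: real
  assumes L: "L > 0" and I0: "I0 \<ge> L" and It: "It \<ge> L/2"
    and h1: "\<bar>It - I0 + t * J\<bar> \<le> C * t^2" and h2: "\<bar>It - I0\<bar> \<le> A * \<bar>t\<bar>"
  shows "\<bar>ln It - ln I0 - t * (- (J / I0))\<bar> \<le> (2 * A^2 / L^2 + C / L) * t^2"
proof -
  have Itp: "It > 0" and I0p: "I0 > 0" using L I0 It by auto
  have 1: "\<bar>ln It - ln I0 - (It - I0) / I0\<bar> \<le> (It - I0)^2 / (It * I0)"
    by (rule ln_taylor[OF Itp I0p])
  have "\<bar>It - I0\<bar>^2 \<le> (A * \<bar>t\<bar>)^2" by (rule power_mono[OF h2 abs_ge_zero])
  then have sq: "(It - I0)^2 \<le> (A * \<bar>t\<bar>)^2" by simp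
  have "(L/2) * L \<le> It * I0" by (rule mult_mono[OF It I0]) (use L It in auto)
  then have den: "L * L / 2 \<le> It * I0" by simp
  have "(It - I0)^2 / (It * I0) \<le> (A * \<bar>t\<bar>)^2 / (L * L / 2)"
    by (rule frac_le[OF _ sq _ den]) (use L in auto)
  also have "\<dots> = 2 * A^2 / L^2 * t^2" by (simp add: power2_eq_square field_simps)
  finally have 2: "(It - I0)^2 / (It * I0) \<le> 2 * A^2 / L^2 * t^2" .
  have "\<bar>(It - I0 + t * J) / I0\<bar> = \<bar>It - I0 + t * J\<bar> / I0" using I0p by simp
  also have "\<dots> \<le> C * t^2 / I0" using h1 I0p by (simp add: divide_right_mono)
  also have "\<dots> \<le> C * t^2 / L"
  proof -
    have "C * t^2 \<ge> 0" using h1 by linarith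
    then show ?thesis using L I0 by (simp add: divide_left_mono)
  qed
  finally have 3: "\<bar>(It - I0 + t * J) / I0\<bar> \<le> C / L * t^2" by simp
  have id: "ln It - ln I0 - t * (- (J / I0)) = (ln It - ln I0 - (It - I0) / I0) + (It - I0 + t * J) / I0"
    using I0p by (simp add: field_simps)
  have "\<bar>ln It - ln I0 - t * (- (J / I0))\<bar> \<le> \<bar>ln It - ln I0 - (It - I0) / I0\<bar> + \<bar>(It - I0 + t * J) / I0\<bar>"
    unfolding id by (rule abs_triangle_ineq)
  also have "\<dots> \<le> 2 * A^2 / L^2 * t^2 + C / L * t^2" using 1 2 3 by linarith
  finally show ?thesis by (simp add: algebra_simps)
qed

theorem lemma2p5:
  fixes X :: "'a::topological_space set" and Y :: "'b::topological_space set"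
    and \<mu> :: "'a measure" and \<nu> :: "'b measure"
    and c :: "'a \<times> 'b \<Rightarrow> real" and u :: "'a \<Rightarrow> real"
  assumes "compact X" and "compact Y"
    and "prob_space \<mu>" and "sets \<mu> = sets (restrict_space borel X)"
    and "prob_space \<nu>" and "sets \<nu> = sets (restrict_space borel Y)"
    and "continuous_on (X \<times> Y) c"
    and "continuous_on X u"
  shows "(critical_point X \<mu> \<nu> c u \<longleftrightarrow> (AE x in \<mu>. rho \<mu> \<nu> c u x = 1))
    \<and> (critical_point X \<mu> \<nu> c u \<longrightarrow>
         continuous_on X (Sop \<mu> \<nu> c u) \<and>
         (\<forall>x\<in>X. Sop \<mu> \<nu> c (Sop \<mu> \<nu> c u) x = Sop \<mu> \<nu> c u x))"
proof -
  note P1 = assms(3) and sX = assms(4) and P2 = assms(5) and sY = assms(6)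
    and cc = assms(7) and cu = assms(8) and cX = assms(1) and cY = assms(2)
  have spX: "space \<mu> = X" by (rule space_eq[OF sX])
  have spY: "space \<nu> = Y" by (rule space_eq[OF sY])
  have intX: "integrable \<mu> h" if "continuous_on X h" for h :: "'a \<Rightarrow> real"
    by (rule int_cont[OF P1 sX cX that])
  have intY: "integrable \<nu> h" if "continuous_on Y h" for h :: "'b \<Rightarrow> real"
    by (rule int_cont[OF P2 sY cY that])
  have cswap: "continuous_on (Y \<times> X) (\<lambda>p. c (snd p, fst p))"
    by (rule continuous_on_compose2[OF cc]) (auto intro!: continuous_intros)
  have ccx: "continuous_on X (\<lambda>x. c (x, y))" if "y \<in> Y" for y
    by (rule continuous_on_compose2[OF cc]) (use that in \<open>auto intro!: continuous_intros\<close>)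
  have vcont: "continuous_on Y (vdual \<mu> c w)"
    and vpos: "\<And>y. y \<in> Y \<Longrightarrow> (\<integral>x. exp (- c (x, y) - w x) \<partial>\<mu>) > 0"
    if cw: "continuous_on X w" for w
  proof -
    have cw2: "continuous_on (Y \<times> X) (\<lambda>p. w (snd p))"
      by (rule continuous_on_compose2[OF cw]) (auto intro!: continuous_intros)
    have cg: "continuous_on (Y \<times> X) (\<lambda>p. - c (snd p, fst p) - w (snd p))"
      using cswap cw2 by (intro continuous_intros)
    note D = dual_cont[OF P1 sX cX cY cg]
    have "vdual \<mu> c w = (\<lambda>y. ln (\<integral>x. exp (- c (x, y) - w x) \<partial>\<mu>))"
      by (simp add: fun_eq_iff vdual_def)
    then show "continuous_on Y (vdual \<mu> c w)" using D(1) by simp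
    show "\<And>y. y \<in> Y \<Longrightarrow> (\<integral>x. exp (- c (x, y) - w x) \<partial>\<mu>) > 0" using D(2) by simp
  qed
  have ucont: "continuous_on X (udual \<nu> c v)"
    and upos: "\<And>x. x \<in> X \<Longrightarrow> (\<integral>y. exp (- c (x, y) - v y) \<partial>\<nu>) > 0"
    if cv: "continuous_on Y v" for v
  proof -
    have cv2: "continuous_on (X \<times> Y) (\<lambda>p. v (snd p))"
      by (rule continuous_on_compose2[OF cv]) (auto intro!: continuous_intros)
    have cg: "continuous_on (X \<times> Y) (\<lambda>p. - c p - v (snd p))"
      using cc cv2 by (intro continuous_intros)
    note D = dual_cont[OF P2 sY cY cX cg]
    have "udual \<nu> c v = (\<lambda>x. ln (\<integral>y. exp (- c (x, y) - v y) \<partial>\<nu>))"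
      by (simp add: fun_eq_iff udual_def)
    then show "continuous_on X (udual \<nu> c v)" using D(1) by simp
    show "\<And>x. x \<in> X \<Longrightarrow> (\<integral>y. exp (- c (x, y) - v y) \<partial>\<nu>) > 0" using D(2) by simp
  qed
  have Scont: "continuous_on X (Sop \<mu> \<nu> c w)" if "continuous_on X w" for w
    unfolding Sop_def by (rule ucont[OF vcont[OF that]])
  obtain Bc where Bc: "\<And>z. z \<in> X \<times> Y \<Longrightarrow> \<bar>c z\<bar> \<le> Bc"
    using cont_bound[OF compact_Times[OF cX cY] cc] by blast
  obtain Bu where Bu: "\<And>x. x \<in> X \<Longrightarrow> \<bar>u x\<bar> \<le> Bu"
    using cont_bound[OF cX cu] by blast
  define Bb where "Bb = Bc + Bu"
  define Lo where "Lo = exp (- Bb)"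
  define Up where "Up = exp Bb"
  have Lo: "Lo > 0" by (simp add: Lo_def)
  define E where "E = (\<lambda>x y. exp (- c (x, y) - u x))"
  have Ebd: "Lo \<le> E x y \<and> E x y \<le> Up" if "x \<in> X" "y \<in> Y" for x y
  proof -
    have "\<bar>c (x,y)\<bar> \<le> Bc" "\<bar>u x\<bar> \<le> Bu" using Bc Bu that by auto
    then have "- Bb \<le> - c (x, y) - u x" "- c (x, y) - u x \<le> Bb" by (auto simp: Bb_def)
    then show ?thesis by (simp add: E_def Lo_def Up_def)
  qed
  have Ecx: "continuous_on X (\<lambda>x. E x y)" if "y \<in> Y" for y
    unfolding E_def using ccx[OF that] cu by (intro continuous_intros)
  have EcXY: "continuous_on (X \<times> Y) (\<lambda>p. E (fst p) (snd p))"
  proof -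
    have "continuous_on (X \<times> Y) (\<lambda>p. u (fst p))"
      by (rule continuous_on_compose2[OF cu]) (auto intro!: continuous_intros)
    then show ?thesis unfolding E_def using cc by (auto intro!: continuous_intros)
  qed
  define I0 where "I0 = (\<lambda>y. \<integral>x. E x y \<partial>\<mu>)"
  have I0pos: "I0 y > 0" if "y \<in> Y" for y
    using vpos[OF cu that] by (simp add: I0_def E_def)
  have I0ge: "Lo \<le> I0 y" if y: "y \<in> Y" for y
    unfolding I0_def by (rule int_ge[OF P1 intX[OF Ecx[OF y]]]) (use Ebd y spX in auto)
  have vu: "vdual \<mu> c u y = ln (I0 y)" for y by (simp add: vdual_def I0_def E_def)
  have I0cont: "continuous_on Y I0"
  proof -
    have "continuous_on Y (\<lambda>y. exp (vdual \<mu> c u y))" using vcont[OF cu] by (intro continuous_intros)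
    moreover have "continuous_on Y (\<lambda>y. exp (vdual \<mu> c u y)) = continuous_on Y I0"
      by (rule continuous_on_cong[OF refl]) (use I0pos in \<open>simp add: vu\<close>)
    ultimately show ?thesis by simp
  qed
  have rho_eq: "rho \<mu> \<nu> c u x = (\<integral>y. E x y / I0 y \<partial>\<nu>)" if x: "x \<in> X" for x
  proof -
    have A: "(\<integral>y. exp (- c (x, y) - vdual \<mu> c u y) \<partial>\<nu>) > 0" using upos[OF vcont[OF cu] x] .
    have "rho \<mu> \<nu> c u x = exp (ln (\<integral>y. exp (- c (x, y) - vdual \<mu> c u y) \<partial>\<nu>) - u x)"
      by (simp add: rho_def Sop_def udual_def)
    also have "\<dots> = (\<integral>y. exp (- c (x, y) - vdual \<mu> c u y) \<partial>\<nu>) / exp (u x)"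
      using A by (simp add: exp_diff)
    also have "\<dots> = (\<integral>y. exp (- c (x, y) - vdual \<mu> c u y) / exp (u x) \<partial>\<nu>)"
      by (rule integral_divide_zero[symmetric])
    also have "\<dots> = (\<integral>y. E x y / I0 y \<partial>\<nu>)"
    proof (rule Bochner_Integration.integral_cong[OF refl])
      fix y assume "y \<in> space \<nu>"
      then have y: "y \<in> Y" using spY by simp
      show "exp (- c (x, y) - vdual \<mu> c u y) / exp (u x) = E x y / I0 y"
        using I0pos[OF y] by (simp add: vu E_def exp_diff)
    qed
    finally show ?thesis .
  qed
  have rho_fun: "rho \<mu> \<nu> c u = (\<lambda>x. exp (Sop \<mu> \<nu> c u x - u x))"
    by (simp add: fun_eq_iff rho_def)
  have rcont: "continuous_on X (rho \<mu> \<nu> c u)"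
    unfolding rho_fun using Scont[OF cu] cu by (intro continuous_intros)
  have deriv: "((\<lambda>t. Ffun \<mu> \<nu> c (\<lambda>x. u x + t * ud x)) has_real_derivative
      (\<integral>x. ud x * (1 - rho \<mu> \<nu> c u x) \<partial>\<mu>)) (at 0)" if cud: "continuous_on X ud" for ud
  proof -
    obtain M where M: "M > 0" "\<And>x. x \<in> X \<Longrightarrow> \<bar>ud x\<bar> \<le> M"
      using cont_bound[OF cX cud] by blast
    define \<delta> where "\<delta> = 1 / (2 * M)"
    have \<delta>: "\<delta> > 0" using M by (simp add: \<delta>_def)
    have \<delta>M: "\<delta> * M = 1/2" using M by (simp add: \<delta>_def)
    define J where "J = (\<lambda>y. \<integral>x. ud x * E x y \<partial>\<mu>)"
    have Jcont: "continuous_on Y J"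
    proof -
      have cud2: "continuous_on (Y \<times> X) (\<lambda>p. ud (snd p))"
        by (rule continuous_on_compose2[OF cud]) (auto intro!: continuous_intros)
      have "continuous_on (Y \<times> X) (\<lambda>x. E (fst (snd x, fst x)) (snd (snd x, fst x)))"
        by (rule continuous_on_compose2[OF EcXY, of _ "\<lambda>p. (snd p, fst p)"]) (auto intro!: continuous_intros)
      then have cE2: "continuous_on (Y \<times> X) (\<lambda>p. E (snd p) (fst p))" by simp
      have "continuous_on (Y \<times> X) (\<lambda>p. ud (snd p) * E (snd p) (fst p))"
        using cud2 cE2 by (intro continuous_intros)
      from cont_param_int[OF P1 sX cX this] show ?thesis by (simp add: J_def)
    qed
    have Jbd: "\<bar>J y\<bar> \<le> M * Up" if y: "y \<in> Y" for y
      unfolding J_def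
    proof (rule int_abs_le[OF P1])
      show "integrable \<mu> (\<lambda>x. ud x * E x y)" using cud Ecx[OF y] by (intro intX continuous_intros)
      fix x assume "x \<in> space \<mu>"
      then have x: "x \<in> X" using spX by simp
      have "\<bar>ud x * E x y\<bar> = \<bar>ud x\<bar> * E x y" using Ebd[OF x y] Lo by (simp add: abs_mult)
      also have "\<dots> \<le> M * Up" using M(2)[OF x] Ebd[OF x y] Lo by (intro mult_mono) auto
      finally show "\<bar>ud x * E x y\<bar> \<le> M * Up" .
    qed
    define H where "H = (\<lambda>t. \<integral>y. vdual \<mu> c (\<lambda>x. u x + t * ud x) y \<partial>\<nu>)"
    have dH: "(H has_real_derivative (\<integral>y. - (J y / I0 y) \<partial>\<nu>)) (at 0)"
      unfolding H_def
    proof (rule deriv_int[OF P2 _ _ \<delta>, where K="2 * (2 * Up * M)^2 / Lo^2 + (2 * Up * M^2) / Lo"])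
      show "integrable \<nu> (vdual \<mu> c (\<lambda>x. u x + t * ud x))" for t
        using cu cud by (intro intY vcont continuous_intros)
      show "integrable \<nu> (\<lambda>y. - (J y / I0 y))"
        using Jcont I0cont by (intro intY continuous_intros) (auto dest: I0pos)
      fix t y assume t: "\<bar>t\<bar> < \<delta>" and "y \<in> space \<nu>"
      then have y: "y \<in> Y" using spY by simp
      define a where "a = (\<lambda>x. E x y * exp (- (t * ud x)))"
      have sb: "\<bar>t * ud x\<bar> \<le> 1/2" if x: "x \<in> X" for x
      proof -
        have "\<bar>t * ud x\<bar> = \<bar>t\<bar> * \<bar>ud x\<bar>" by (simp add: abs_mult)
        also have "\<dots> \<le> \<delta> * M" using t M(2)[OF x] by (intro mult_mono) auto
        finally show ?thesis using \<delta>M by simp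
      qed
      have ca: "continuous_on X a" unfolding a_def using Ecx[OF y] cud by (intro continuous_intros)
      have ia: "integrable \<mu> a" by (rule intX[OF ca])
      have ie: "integrable \<mu> (\<lambda>x. E x y)" by (rule intX[OF Ecx[OF y]])
      have ij: "integrable \<mu> (\<lambda>x. ud x * E x y)" using cud Ecx[OF y] by (intro intX continuous_intros)
      have f_t: "vdual \<mu> c (\<lambda>x. u x + t * ud x) y = ln (\<integral>x. a x \<partial>\<mu>)"
      proof -
        have "\<And>x. exp (- c (x, y) - (u x + t * ud x)) = a x"
          unfolding a_def E_def mult_exp_exp by (simp add: algebra_simps)
        then show ?thesis by (simp add: vdual_def)
      qed
      have f_0: "vdual \<mu> c (\<lambda>x. u x + 0 * ud x) y = ln (I0 y)" by (simp add: vu)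
      have Itge: "Lo / 2 \<le> (\<integral>x. a x \<partial>\<mu>)"
      proof (rule int_ge[OF P1 ia])
        fix x assume "x \<in> space \<mu>"
        then have x: "x \<in> X" using spX by simp
        have "1 - t * ud x \<le> exp (- (t * ud x))" using exp_ge_add_one_self[of "- (t * ud x)"] by simp
        moreover have "1 - t * ud x \<ge> 1/2" using sb[OF x] by (simp add: abs_le_iff)
        ultimately have e2: "1/2 \<le> exp (- (t * ud x))" by linarith
        have "Lo * (1/2) \<le> E x y * exp (- (t * ud x))"
          by (rule mult_mono[OF _ e2]) (use Ebd[OF x y] Lo in auto)
        then show "Lo / 2 \<le> a x" by (simp add: a_def)
      qed
      have h1: "\<bar>(\<integral>x. a x \<partial>\<mu>) - I0 y + t * J y\<bar> \<le> (2 * Up * M^2) * t^2"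
      proof -
        have "(\<integral>x. a x \<partial>\<mu>) - I0 y + t * J y = (\<integral>x. a x - E x y + t * (ud x * E x y) \<partial>\<mu>)"
          using ia ie ij by (simp add: I0_def J_def)
        also have "\<bar>\<dots>\<bar> \<le> (2 * Up * M^2) * t^2"
        proof (rule int_abs_le[OF P1])
          show "integrable \<mu> (\<lambda>x. a x - E x y + t * (ud x * E x y))" using ia ie ij by simp
          fix x assume "x \<in> space \<mu>"
          then have x: "x \<in> X" using spX by simp
          have "a x - E x y + t * (ud x * E x y) = E x y * (exp (- (t * ud x)) - 1 - (- (t * ud x)))"
            by (simp add: a_def algebra_simps)
          also have "\<bar>\<dots>\<bar> = E x y * \<bar>exp (- (t * ud x)) - 1 - (- (t * ud x))\<bar>"
            using Ebd[OF x y] Lo by (simp add: abs_mult)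
          also have "\<dots> \<le> Up * (2 * (- (t * ud x))^2)"
            using Ebd[OF x y] Lo exp_taylor[of "- (t * ud x)"] sb[OF x] by (intro mult_mono) auto
          also have "(- (t * ud x))^2 = t^2 * (ud x)^2" by (simp add: power_mult_distrib)
          also have "Up * (2 * (t^2 * (ud x)^2)) \<le> Up * (2 * (t^2 * M^2))"
          proof -
            have "(ud x)^2 \<le> M^2" using M(2)[OF x] by (metis abs_ge_zero power2_abs power_mono)
            then show ?thesis using Ebd[OF x y] Lo by (intro mult_left_mono) auto
          qed
          also have "\<dots> = (2 * Up * M^2) * t^2" by (simp add: algebra_simps)
          finally show "\<bar>a x - E x y + t * (ud x * E x y)\<bar> \<le> (2 * Up * M^2) * t^2" .
        qed
        finally show ?thesis .
      qed
      have h2: "\<bar>(\<integral>x. a x \<partial>\<mu>) - I0 y\<bar> \<le> (2 * Up * M) * \<bar>t\<bar>"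
      proof -
        have "(\<integral>x. a x \<partial>\<mu>) - I0 y = (\<integral>x. a x - E x y \<partial>\<mu>)"
          using ia ie by (simp add: I0_def)
        also have "\<bar>\<dots>\<bar> \<le> (2 * Up * M) * \<bar>t\<bar>"
        proof (rule int_abs_le[OF P1])
          show "integrable \<mu> (\<lambda>x. a x - E x y)" using ia ie by simp
          fix x assume "x \<in> space \<mu>"
          then have x: "x \<in> X" using spX by simp
          define s where "s = - (t * ud x)"
          have s: "\<bar>s\<bar> \<le> 1/2" using sb[OF x] by (simp add: s_def)
          have "\<bar>exp s - 1 - s\<bar> \<le> 2 * s^2" by (rule exp_taylor[OF s])
          moreover have "2 * s^2 \<le> \<bar>s\<bar>"
          proof -
            have "2 * s^2 = (2 * \<bar>s\<bar>) * \<bar>s\<bar>" by (simp add: power2_eq_square)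
            also have "\<dots> \<le> 1 * \<bar>s\<bar>" using s by (intro mult_right_mono) auto
            finally show ?thesis by simp
          qed
          ultimately have es: "\<bar>exp s - 1\<bar> \<le> 2 * \<bar>s\<bar>" by linarith
          have "\<bar>s\<bar> \<le> \<bar>t\<bar> * M" using M(2)[OF x] by (simp add: s_def abs_mult mult_left_mono)
          then have es2: "\<bar>exp s - 1\<bar> \<le> 2 * M * \<bar>t\<bar>" using es by (simp add: algebra_simps)
          have "a x - E x y = E x y * (exp s - 1)" by (simp add: a_def s_def algebra_simps)
          also have "\<bar>\<dots>\<bar> = E x y * \<bar>exp s - 1\<bar>" using Ebd[OF x y] Lo by (simp add: abs_mult)
          also have "\<dots> \<le> Up * (2 * M * \<bar>t\<bar>)" using Ebd[OF x y] Lo es2 by (intro mult_mono) auto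
          also have "\<dots> = (2 * Up * M) * \<bar>t\<bar>" by (simp add: algebra_simps)
          finally show "\<bar>a x - E x y\<bar> \<le> (2 * Up * M) * \<bar>t\<bar>" .
        qed
        finally show ?thesis .
      qed
      have "\<bar>ln (\<integral>x. a x \<partial>\<mu>) - ln (I0 y) - t * (- (J y / I0 y))\<bar>
          \<le> (2 * (2 * Up * M)^2 / Lo^2 + (2 * Up * M^2) / Lo) * t^2"
        by (rule combine[OF Lo I0ge[OF y] Itge h1 h2])
      then show "\<bar>vdual \<mu> c (\<lambda>x. u x + t * ud x) y - vdual \<mu> c (\<lambda>x. u x + 0 * ud x) y - t * - (J y / I0 y)\<bar>
          \<le> (2 * (2 * Up * M)^2 / Lo^2 + (2 * Up * M^2) / Lo) * t^2"
        unfolding f_t f_0 by simp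
    qed
    have fub: "(\<integral>y. J y / I0 y \<partial>\<nu>) = (\<integral>x. ud x * rho \<mu> \<nu> c u x \<partial>\<mu>)"
    proof -
      define h where "h = (\<lambda>x y. ud x * E x y / I0 y)"
      have cud1: "continuous_on (X \<times> Y) (\<lambda>p. ud (fst p))"
        by (rule continuous_on_compose2[OF cud]) (auto intro!: continuous_intros)
      have cI: "continuous_on (X \<times> Y) (\<lambda>p. I0 (snd p))"
        by (rule continuous_on_compose2[OF I0cont]) (auto intro!: continuous_intros)
      have hc: "continuous_on (X \<times> Y) (\<lambda>p. h (fst p) (snd p))"
        unfolding h_def using cud1 EcXY cI by (intro continuous_intros) (auto dest: I0pos)
      have hm: "(\<lambda>p. h (fst p) (snd p)) \<in> borel_measurable (\<mu> \<Otimes>\<^sub>M \<nu>)"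
        by (rule meas_prod[OF sX sY cX cY hc])
      obtain Bh where Bh: "\<And>z. z \<in> X \<times> Y \<Longrightarrow> \<bar>h (fst z) (snd z)\<bar> \<le> Bh"
        using cont_bound[OF compact_Times[OF cX cY] hc] by blast
      have PP: "prob_space (\<mu> \<Otimes>\<^sub>M \<nu>)" by (rule prob_space_pair[OF P1 P2])
      have hi: "integrable (\<mu> \<Otimes>\<^sub>M \<nu>) (\<lambda>(x, y). h x y)"
        unfolding split_beta'
      proof (rule finite_measure.integrable_const_bound[OF prob_space.axioms(1)[OF PP] _ hm])
        show "AE z in \<mu> \<Otimes>\<^sub>M \<nu>. norm (h (fst z) (snd z)) \<le> Bh"
          using Bh by (intro AE_I2) (simp add: space_pair_measure spX spY)
      qed
      have ps: "pair_sigma_finite \<mu> \<nu>"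
        unfolding pair_sigma_finite_def using P1 P2 by (auto intro: prob_space_imp_sigma_finite)
      have F: "(\<integral>y. (\<integral>x. h x y \<partial>\<mu>) \<partial>\<nu>) = (\<integral>x. (\<integral>y. h x y \<partial>\<nu>) \<partial>\<mu>)"
        by (rule pair_sigma_finite.Fubini_integral[OF ps hi])
      have L: "(\<integral>y. (\<integral>x. h x y \<partial>\<mu>) \<partial>\<nu>) = (\<integral>y. J y / I0 y \<partial>\<nu>)"
        by (simp add: h_def J_def)
      have R: "(\<integral>x. (\<integral>y. h x y \<partial>\<nu>) \<partial>\<mu>) = (\<integral>x. ud x * rho \<mu> \<nu> c u x \<partial>\<mu>)"
      proof (rule Bochner_Integration.integral_cong[OF refl])
        fix x assume "x \<in> space \<mu>"
        then have x: "x \<in> X" using spX by simp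
        have "(\<integral>y. h x y \<partial>\<nu>) = (\<integral>y. ud x * (E x y / I0 y) \<partial>\<nu>)" by (simp add: h_def)
        also have "\<dots> = ud x * (\<integral>y. E x y / I0 y \<partial>\<nu>)" by (rule integral_mult_right_zero)
        also have "\<dots> = ud x * rho \<mu> \<nu> c u x" by (simp add: rho_eq[OF x])
        finally show "(\<integral>y. h x y \<partial>\<nu>) = ud x * rho \<mu> \<nu> c u x" .
      qed
      show ?thesis using F L R by simp
    qed
    have Geq: "(\<lambda>t. Ffun \<mu> \<nu> c (\<lambda>x. u x + t * ud x)) = (\<lambda>t. ((\<integral>x. u x \<partial>\<mu>) + (\<integral>x. ud x \<partial>\<mu>) * t) + H t)"
    proof
      fix t
      have "(\<integral>x. u x + t * ud x \<partial>\<mu>) = (\<integral>x. u x \<partial>\<mu>) + (\<integral>x. t * ud x \<partial>\<mu>)"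
        by (rule Bochner_Integration.integral_add[OF intX[OF cu] integrable_mult_right[OF intX[OF cud]]])
      also have "(\<integral>x. t * ud x \<partial>\<mu>) = (\<integral>x. ud x \<partial>\<mu>) * t" by simp
      finally show "Ffun \<mu> \<nu> c (\<lambda>x. u x + t * ud x) = ((\<integral>x. u x \<partial>\<mu>) + (\<integral>x. ud x \<partial>\<mu>) * t) + H t"
        by (simp add: Ffun_def H_def)
    qed
    have d1: "((\<lambda>t. (\<integral>x. u x \<partial>\<mu>) + (\<integral>x. ud x \<partial>\<mu>) * t) has_real_derivative (\<integral>x. ud x \<partial>\<mu>)) (at 0)"
      by (auto intro!: derivative_eq_intros)
    have d2: "((\<lambda>t. Ffun \<mu> \<nu> c (\<lambda>x. u x + t * ud x)) has_real_derivative
        (\<integral>x. ud x \<partial>\<mu>) + (\<integral>y. - (J y / I0 y) \<partial>\<nu>)) (at 0)"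
      unfolding Geq by (rule DERIV_add[OF d1 dH])
    have ir: "integrable \<mu> (\<lambda>x. ud x * rho \<mu> \<nu> c u x)" using cud rcont by (intro intX continuous_intros)
    have "(\<integral>x. ud x \<partial>\<mu>) + (\<integral>y. - (J y / I0 y) \<partial>\<nu>) = (\<integral>x. ud x \<partial>\<mu>) - (\<integral>x. ud x * rho \<mu> \<nu> c u x \<partial>\<mu>)"
      using fub by simp
    also have "\<dots> = (\<integral>x. ud x - ud x * rho \<mu> \<nu> c u x \<partial>\<mu>)"
      by (rule Bochner_Integration.integral_diff[OF intX[OF cud] ir, symmetric])
    also have "\<dots> = (\<integral>x. ud x * (1 - rho \<mu> \<nu> c u x) \<partial>\<mu>)" by (simp add: algebra_simps)
    finally show ?thesis using d2 by simp
  qed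
  have crit: "critical_point X \<mu> \<nu> c u \<longleftrightarrow> (AE x in \<mu>. rho \<mu> \<nu> c u x = 1)"
  proof
    assume cp: "critical_point X \<mu> \<nu> c u"
    define ud where "ud = (\<lambda>x. 1 - rho \<mu> \<nu> c u x)"
    have cud: "continuous_on X ud" unfolding ud_def using rcont by (intro continuous_intros)
    have d0: "((\<lambda>t. Ffun \<mu> \<nu> c (\<lambda>x. u x + t * ud x)) has_real_derivative 0) (at 0)"
      using cp cud unfolding critical_point_def by blast
    have "(\<integral>x. ud x * (1 - rho \<mu> \<nu> c u x) \<partial>\<mu>) = 0" using DERIV_unique[OF deriv[OF cud] d0] .
    then have z: "(\<integral>x. ud x * ud x \<partial>\<mu>) = 0" by (simp add: ud_def)
    have iu: "integrable \<mu> (\<lambda>x. ud x * ud x)" using cud by (intro intX continuous_intros)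
    have nn: "AE x in \<mu>. 0 \<le> ud x * ud x" by simp
    have "AE x in \<mu>. ud x * ud x = 0" using integral_nonneg_eq_0_iff_AE[OF iu nn] z by simp
    then show "AE x in \<mu>. rho \<mu> \<nu> c u x = 1" by eventually_elim (simp add: ud_def)
  next
    assume ae: "AE x in \<mu>. rho \<mu> \<nu> c u x = 1"
    show "critical_point X \<mu> \<nu> c u" unfolding critical_point_def
    proof (intro allI impI)
      fix ud :: "'a \<Rightarrow> real" assume cud: "continuous_on X ud"
      have "AE x in \<mu>. ud x * (1 - rho \<mu> \<nu> c u x) = 0" using ae by eventually_elim simp
      then have "(\<integral>x. ud x * (1 - rho \<mu> \<nu> c u x) \<partial>\<mu>) = 0" by (rule integral_eq_zero_AE)
      then show "((\<lambda>t. Ffun \<mu> \<nu> c (\<lambda>x. u x + t * ud x)) has_real_derivative 0) (at 0)"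
        using deriv[OF cud] by simp
    qed
  qed
  have fixp: "\<forall>x\<in>X. Sop \<mu> \<nu> c (Sop \<mu> \<nu> c u) x = Sop \<mu> \<nu> c u x"
    if ae: "AE x in \<mu>. rho \<mu> \<nu> c u x = 1"
  proof
    fix x assume x: "x \<in> X"
    have aeS: "AE x in \<mu>. Sop \<mu> \<nu> c u x = u x" using ae by eventually_elim (simp add: rho_def)
    have vv: "vdual \<mu> c (Sop \<mu> \<nu> c u) y = vdual \<mu> c u y" if y: "y \<in> Y" for y
    proof -
      have "(\<integral>x. exp (- c (x, y) - Sop \<mu> \<nu> c u x) \<partial>\<mu>) = (\<integral>x. exp (- c (x, y) - u x) \<partial>\<mu>)"
      proof (rule integral_cong_AE)
        show "(\<lambda>x. exp (- c (x, y) - Sop \<mu> \<nu> c u x)) \<in> borel_measurable \<mu>"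
          by (rule meas_cont[OF sX]) (use ccx[OF y] Scont[OF cu] in \<open>intro continuous_intros\<close>)
        show "(\<lambda>x. exp (- c (x, y) - u x)) \<in> borel_measurable \<mu>"
          by (rule meas_cont[OF sX]) (use ccx[OF y] cu in \<open>intro continuous_intros\<close>)
        show "AE x in \<mu>. exp (- c (x, y) - Sop \<mu> \<nu> c u x) = exp (- c (x, y) - u x)"
          using aeS by eventually_elim simp
      qed
      then show ?thesis by (simp add: vdual_def)
    qed
    have e1: "Sop \<mu> \<nu> c (Sop \<mu> \<nu> c u) x = ln (\<integral>y. exp (- c (x, y) - vdual \<mu> c (Sop \<mu> \<nu> c u) y) \<partial>\<nu>)"
      unfolding Sop_def[of \<mu> \<nu> c "Sop \<mu> \<nu> c u"] udual_def by (rule refl)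
    have e2: "Sop \<mu> \<nu> c u x = ln (\<integral>y. exp (- c (x, y) - vdual \<mu> c u y) \<partial>\<nu>)"
      by (simp add: Sop_def udual_def)
    have "(\<integral>y. exp (- c (x, y) - vdual \<mu> c (Sop \<mu> \<nu> c u) y) \<partial>\<nu>) = (\<integral>y. exp (- c (x, y) - vdual \<mu> c u y) \<partial>\<nu>)"
      by (rule Bochner_Integration.integral_cong[OF refl]) (simp add: vv spY)
    then show "Sop \<mu> \<nu> c (Sop \<mu> \<nu> c u) x = Sop \<mu> \<nu> c u x" using e1 e2 by simp
  qed
  show ?thesis using crit fixp Scont[OF cu] by blast
qed

end
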